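(* Let $q$ be an odd prime power and let $P(q^2)$ be the Paley graph on $\mathbb{F}_{q^2}$, with non-principal eigenvalues $\lambda_1=\frac{-1+q}{2}$ and $\lambda_2=\frac{-1-q}{2}$. For each $i\in\{1,2\}$, the minimum cardinality of the support of a $\lambda_i$-eigenfunction of $P(q^2)$ equals $q+1$. *)

theory Defs
  imports Complex_Main "HOL-Computational_Algebra.Primes"
begin

definition paley_adj :: "'a::field \<Rightarrow> 'a \<Rightarrow> bool" where
  "paley_adj x y \<longleftrightarrow> (\<exists>z. z \<noteq> 0 \<and> x - y = z * z)"

definition paley_eigenfunction :: "('a::{field,finite} \<Rightarrow> real) \<Rightarrow> real \<Rightarrow> bool" where
  "paley_eigenfunction f l \<longleftrightarrow>
     f \<noteq> (\<lambda>_. 0) \<and> (\<forall>x. (\<Sum>y\<in>{y. paley_adj x y}. f y) = l * f x)"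

definition supp_fun :: "('a \<Rightarrow> real) \<Rightarrow> 'a set" where
  "supp_fun f = {x. f x \<noteq> 0}"

end

theory Submission imports Defs "HOL-Computational_Algebra.Polynomial" begin

lemma roots_bound:
  assumes "m \<ge> 1"
  shows "card {x::'a::idom. x^m = c} \<le> m"
proof -
  have ne: "monom 1 m - [:c:] \<noteq> (0::'a poly)"
  proof
    assume "monom 1 m - [:c:] = (0::'a poly)"
    then have "coeff (monom 1 m - [:c:]) m = coeff (0::'a poly) m" by simp
    then show False using assms by (cases m) (auto simp: coeff_monom)
  qed
  have deg: "degree (monom 1 m - [:c:] :: 'a poly) \<le> m"
    by (rule degree_diff_le) (auto simp: degree_monom_le)
  have "{x::'a. x^m = c} = {x. poly (monom 1 m - [:c:]) x = 0}"
    by (simp add: poly_monom)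
  then show ?thesis using card_poly_roots_bound[OF ne] deg by simp
qed

lemma fibre_card:
  assumes "finite A" "\<And>b. card {a\<in>A. g a = b} \<le> m"
  shows "card A \<le> m * card (g ` A)"
proof -
  have eq: "(\<Union>b\<in>g ` A. {a\<in>A. g a = b}) = A" by auto
  have "card A \<le> (\<Sum>b\<in>g ` A. card {a\<in>A. g a = b})"
    using card_UN_le[of "g ` A" "\<lambda>b. {a\<in>A. g a = b}"] assms(1) eq by simp
  also have "\<dots> \<le> (\<Sum>b\<in>g ` A. m)" by (intro sum_mono assms(2))
  finally show ?thesis by (simp add: mult.commute)
qed

lemma idA: fixes u x c :: "'a::field"
  assumes "u \<noteq> 0" "x \<noteq> u" "c*u \<noteq> 1"
  shows "((1 - c*u)/(x - u)) * ((u - x)/(c*u - 1)) = 1"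
proof -
  have a: "x - u \<noteq> 0" "c*u - 1 \<noteq> 0" using assms by auto
  have "(1 - c*u)*(u - x) = (x - u)*(c*u - 1)" by (simp add: algebra_simps)
  then show ?thesis using a by (simp add: divide_simps)
qed

lemma idB: fixes u x c :: "'a::field"
  assumes "c*u \<noteq> 1" "x*c \<noteq> 1"
  shows "((u - x)/(c*u - 1) - x)/(c*((u - x)/(c*u - 1)) - 1) = u"
proof -
  have a: "c*u - 1 \<noteq> 0" "1 - x*c \<noteq> 0" using assms by auto
  have e1: "(u - x)/(c*u - 1) - x = u*(1 - x*c)/(c*u - 1)" using a by (simp add: field_simps)
  have e2: "c*((u - x)/(c*u - 1)) - 1 = (1 - x*c)/(c*u - 1)" using a by (simp add: field_simps)
  show ?thesis unfolding e1 e2 using a by simp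
qed

lemma idC: fixes u x c :: "'a::field"
  assumes "u \<noteq> 0" "x \<noteq> u" "c*u \<noteq> 1" "x*c \<noteq> 1"
  shows "((1 - c*u)/(x - u) - c)/((u - x)/(c*u - 1) - x) = (1/u - c)/(u - x)"
proof -
  have a: "c*u - 1 \<noteq> 0" "1 - x*c \<noteq> 0" "x - u \<noteq> 0" "u - x \<noteq> 0" using assms by auto
  have e1: "(u - x)/(c*u - 1) - x = u*(1 - x*c)/(c*u - 1)" using a by (simp add: field_simps)
  have e2: "(1 - c*u)/(x - u) - c = (1 - x*c)/(x - u)" using a by (simp add: field_simps)
  have e3: "1/u - c = (1 - c*u)/u" using assms by (simp add: field_simps)
  have l: "((1 - x*c)/(x - u)) / (u*(1 - x*c)/(c*u - 1)) = ((1 - x*c)*(c*u - 1)) / ((x - u)*(u*(1 - x*c)))"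
    by (rule divide_divide_times_eq)
  have r: "((1 - c*u)/u)/(u - x) = (1 - c*u)/(u*(u - x))" by (rule divide_divide_eq_left)
  have "((1 - x*c)*(c*u - 1)) / ((x - u)*(u*(1 - x*c))) = (1 - c*u)/(u*(u - x))"
  proof -
    have n1: "(x - u)*(u*(1 - x*c)) \<noteq> 0" "u*(u - x) \<noteq> 0" using a assms(1) by auto
    show ?thesis unfolding frac_eq_eq[OF n1] by (simp add: algebra_simps)
  qed
  then show ?thesis unfolding e1 e2 e3 l r .
qed

lemma idD: fixes u x c :: "'a::field"
  assumes "u \<noteq> 0" "c*u \<noteq> 1" "u - x = u*(c*u - 1)"
  shows "(1/u - c)/(u - x) = (-1) * (inverse u * inverse u)"
proof -
  have e3: "1/u - c = -(c*u - 1)/u" using assms by (simp add: field_simps)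
  have a: "c*u - 1 \<noteq> 0" using assms by auto
  show ?thesis unfolding e3 assms(3) using a assms(1) by (simp add: field_simps)
qed

lemma swap_pm: fixes e a b d :: "'a::field" assumes "e*e = 1" "b*b = 1"
  shows "(e*a*b = d) \<longleftrightarrow> (a = e*d*b)"
proof
  assume h: "e*a*b = d"
  have "e*d*b = (e*e)*a*(b*b)" unfolding h[symmetric] by (simp add: algebra_simps)
  then show "a = e*d*b" using assms by simp
next
  assume h: "a = e*d*b"
  have "e*a*b = (e*e)*d*(b*b)" unfolding h by (simp add: algebra_simps)
  then show "e*a*b = d" using assms by simp
qed

locale pf =
  fixes q p k :: nat and dummy :: "'a::{field,finite} itself"
  assumes card: "card (UNIV::'a set) = q^2" and pr: "prime p" and qd: "q = p^k" and k1: "k \<ge> 1" and od: "odd q"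
begin

lemma q3: "q \<ge> 3"
proof -
  have "p \<ge> 2" using pr prime_ge_2_nat by blast
  then have "q \<ge> 2" using qd k1
    by (metis One_nat_def le_trans power_increasing power_one_right prime_gt_0_nat pr Suc_leI)
  then show ?thesis using od by presburger
qed

lemma cardq: "card (UNIV::'a set) = q*q" using card by (simp add: power2_eq_square)

lemma fermat: assumes "(x::'a) \<noteq> 0" shows "x^(q*q - 1) = 1"
proof -
  have "(\<Prod>y\<in>UNIV-{0}. x * y) = x ^ card (UNIV - {0::'a}) * \<Prod>(UNIV-{0::'a})"
    by (simp add: prod.distrib)
  also have "card (UNIV - {0::'a}) = q*q - 1" using cardq by (simp add: card_Diff_singleton)
  also have "(\<Prod>y\<in>UNIV-{0}. x * y) = (\<Prod>y\<in>UNIV-{0::'a}. y)"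
    by (rule prod.reindex_bij_witness[of _ "\<lambda>y. y / x" "\<lambda>y. x * y"]) (use assms in auto)
  finally have "\<Prod>(UNIV-{0::'a}) = x ^ (q*q - 1) * \<Prod>(UNIV-{0::'a})" by simp
  moreover have "\<Prod>(UNIV-{0::'a}) \<noteq> 0" by simp
  ultimately show ?thesis by simp
qed

lemma powqq: "(x::'a)^(q*q) = x"
proof (cases "x = 0")
  case True then show ?thesis using q3 by simp
next
  case False
  have "x^(q*q) = x * x^(q*q-1)" using q3
    by (metis One_nat_def Suc_pred mult_pos_pos not_gr0 not_numeral_le_zero power_Suc zero_less_numeral le_trans)
  then show ?thesis using fermat[OF False] by simp
qed

lemma ofnat_card: "of_nat (q*q) = (0::'a)"
proof -
  have "(\<Sum>y\<in>UNIV. y + 1) = (\<Sum>y\<in>(UNIV::'a set). y)"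
    by (rule sum.reindex_bij_witness[of _ "\<lambda>y. y - 1" "\<lambda>y. y + 1"]) auto
  then have "of_nat (card (UNIV::'a set)) = (0::'a)" by (simp add: sum.distrib)
  then show ?thesis using cardq by simp
qed

lemma char_p: "CHAR('a) = p"
proof -
  have "CHAR('a) > 0" by (rule finite_imp_CHAR_pos) simp
  then have pc: "prime CHAR('a)" by (rule prime_CHAR_semidom)
  have "CHAR('a) dvd q*q" using ofnat_card of_nat_eq_0_iff_char_dvd by blast
  moreover have "q*q = p^(k+k)" using qd by (simp add: power_add)
  ultimately have "CHAR('a) dvd p^(k+k)" by simp
  then have "CHAR('a) dvd p" using pc prime_dvd_power by blast
  then show ?thesis using pc pr by (simp add: primes_dvd_imp_eq)
qed

lemma frob_add: "((x::'a) + y)^q = x^q + y^q"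
proof -
  have "prime CHAR('a)" using char_p pr by simp
  then show ?thesis using freshmans_dream'[of q k x y] char_p qd by simp
qed

definition cj :: "'a \<Rightarrow> 'a" where "cj x = x^q"

lemma cj_add: "cj (x + y) = cj x + cj y" by (simp add: cj_def frob_add)
lemma cj_diff: "cj (x - y) = cj x - cj y"
proof -
  have "cj (x - y) + cj y = cj x" by (metis cj_add diff_add_cancel)
  then show ?thesis by (simp add: algebra_simps)
qed
lemma cj_mult: "cj (x * y) = cj x * cj y" by (simp add: cj_def power_mult_distrib)
lemma cj_div: "cj (x / y) = cj x / cj y" by (simp add: cj_def power_divide)
lemma cj_one[simp]: "cj 1 = 1" by (simp add: cj_def)
lemma cj_zero[simp]: "cj 0 = 0" using q3 by (simp add: cj_def)
lemma cj_minus: "cj (- x) = - cj x" using cj_diff[of 0 x] by simp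
lemma cj_cj[simp]: "cj (cj x) = x" by (simp add: cj_def powqq flip: power_mult)
lemma cj_inj: "cj x = cj y \<Longrightarrow> x = y" by (metis cj_cj)
lemma cj_eq0: "cj x = 0 \<longleftrightarrow> x = 0" by (metis cj_cj cj_zero)

lemma two_ne: "(2::'a) \<noteq> 0"
proof
  assume "(2::'a) = 0"
  then have "of_nat 2 = (0::'a)" by simp
  then have "p dvd 2" using of_nat_eq_0_iff_char_dvd char_p by metis
  then have "p = 2" using pr by (metis prime_nat_iff two_is_prime_nat dvd_refl primes_dvd_imp_eq)
  then show False using od qd k1 by simp
qed

lemma m1_ne: "(-1::'a) \<noteq> 1"
proof
  assume "(-1::'a) = 1"
  then have "1 + 1 = 1 + (-1::'a)" by simp
  then show False using two_ne by simp
qed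

definition h :: nat where "h = (q+1) div 2"
lemma h2: "2*h = q+1" using od unfolding h_def by presburger
lemma qq1: "q*q - 1 = 2*((q-1)*h)"
proof -
  obtain r where r: "q = Suc r" using q3 by (cases q) auto
  have "q*q - 1 = (q-1)*(q+1)" unfolding r by (simp add: algebra_simps)
  also have "\<dots> = 2*((q-1)*h)" using h2 by (metis mult.left_commute)
  finally show ?thesis .
qed
lemma hq: "(q*q-1) div 2 = (q-1)*h" unfolding qq1 by simp

definition chi :: "'a \<Rightarrow> 'a" where "chi x = x^((q*q-1) div 2)"

lemma chi_mult: "chi (x*y) = chi x * chi y" by (simp add: chi_def power_mult_distrib)

lemma chi_sq: "x \<noteq> 0 \<Longrightarrow> chi x * chi x = 1"
proof -
  assume x: "x \<noteq> 0"
  have e: "(q*q-1) div 2 + (q*q-1) div 2 = q*q - 1" unfolding qq1 by simp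
  show ?thesis unfolding chi_def power_add[symmetric] e using fermat[OF x] .
qed

lemma sq_pm1: "(y::'a) * y = 1 \<Longrightarrow> y = 1 \<or> y = -1"
  by (metis power2_eq_1_iff power2_eq_square)

lemma chi_pm: "x \<noteq> 0 \<Longrightarrow> chi x = 1 \<or> chi x = -1" using chi_sq sq_pm1 by blast

lemma chi_rho: assumes "y \<noteq> 0" shows "chi y = (cj y / y)^h"
proof -
  have "y^q = y * y^(q-1)" using q3 by (metis Suc_pred' less_le_trans pos2 le_less_trans power_Suc zero_less_numeral le_refl less_numeral_extra(1) order_less_le_trans)
  then have "cj y / y = y^(q-1)" using assms by (simp add: cj_def)
  then show ?thesis unfolding chi_def hq power_mult by simp
qed

lemma chi_fq: assumes "t \<noteq> 0" "cj t = t" shows "chi t = 1"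
  using chi_rho[OF assms(1)] assms by simp

lemma chi_m1: "chi (-1) = 1"
  by (rule chi_fq) (auto simp: cj_minus)

lemma chi_neg: "chi (- x) = chi x" using chi_mult[of "-1" x] chi_m1 by simp

definition Sq :: "'a set" where "Sq = (\<lambda>z. z*z) ` (UNIV - {0})"

lemma card_sq: "q*q - 1 \<le> 2 * card Sq"
proof -
  have "card (UNIV - {0::'a}) \<le> 2 * card Sq" unfolding Sq_def
  proof (rule fibre_card)
    fix b :: 'a
    have "{a \<in> UNIV - {0}. a * a = b} \<subseteq> {x. x^2 = b}" by (auto simp: power2_eq_square)
    then show "card {a \<in> UNIV - {0}. a * a = b} \<le> 2"
      using roots_bound[of 2 b] by (meson card_mono finite order_trans one_le_numeral)
  qed simp
  then show ?thesis using cardq by (simp add: card_Diff_singleton)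
qed

lemma hpos: "(q*q-1) div 2 \<ge> 1"
proof -
  have "1 \<le> q-1" "1 \<le> h" using h2 q3 by linarith+
  then show ?thesis unfolding hq by (metis mult_le_mono nat_mult_1)
qed

lemma euler: assumes "x \<noteq> 0" shows "(\<exists>z. z \<noteq> 0 \<and> x = z*z) \<longleftrightarrow> chi x = 1"
proof
  assume "\<exists>z. z \<noteq> 0 \<and> x = z*z"
  then obtain z where z: "z \<noteq> 0" "x = z*z" by blast
  show "chi x = 1" using z chi_sq[of z] chi_mult[of z z] by simp
next
  assume c: "chi x = 1"
  define R where "R = {y::'a. y^((q*q-1) div 2) = 1}"
  have cR: "card R \<le> (q*q-1) div 2" unfolding R_def using roots_bound hpos by blast
  have sub: "Sq \<subseteq> R"
  proof
    fix y assume "y \<in> Sq"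
    then obtain z where "z \<noteq> 0" "y = z*z" unfolding Sq_def by auto
    then show "y \<in> R" using chi_sq[of z] chi_mult[of z z] unfolding R_def chi_def by simp
  qed
  have "card R \<le> card Sq" using cR card_sq by linarith
  moreover have "card Sq \<le> card R" using sub by (simp add: card_mono)
  ultimately have "Sq = R" using sub card_subset_eq[of R Sq] by simp
  moreover have "x \<in> R" using c unfolding R_def chi_def by simp
  ultimately show "\<exists>z. z \<noteq> 0 \<and> x = z*z" unfolding Sq_def by auto
qed

lemma nonsq: "\<exists>a::'a. a \<noteq> 0 \<and> chi a = -1"
proof -
  define R where "R = {y::'a. y^((q*q-1) div 2) = 1}"
  have cR: "card R \<le> (q*q-1) div 2" unfolding R_def using roots_bound hpos by blast
  have "card (UNIV - {0::'a}) = q*q - 1" using cardq by (simp add: card_Diff_singleton)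
  moreover have "(q*q-1) div 2 < q*q - 1" using hpos by linarith
  ultimately have "\<not> (UNIV - {0::'a}) \<subseteq> R" using cR
    by (metis card_mono finite leD le_trans)
  then obtain a where "a \<noteq> 0" "a \<notin> R" by auto
  then show ?thesis using chi_pm[of a] unfolding R_def chi_def by auto
qed

lemma adj_iff: "paley_adj x y \<longleftrightarrow> y \<noteq> x \<and> chi (y - x) = 1"
proof -
  have "paley_adj x y \<longleftrightarrow> x - y \<noteq> 0 \<and> chi (x - y) = 1"
    unfolding paley_adj_def using euler by (metis mult_eq_0_iff)
  also have "chi (x - y) = chi (y - x)" using chi_neg[of "y - x"] by simp
  finally show ?thesis by auto
qed

definition U :: "'a set" where "U = {u. u^(q+1) = 1}"
definition eta :: "'a \<Rightarrow> 'a" where "eta u = u^h"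
definition eps :: 'a where "eps = (-1)^h"
definition etr :: "'a \<Rightarrow> real" where "etr u = (if eta u = 1 then 1 else -1)"

lemma cjmul: "cj u * u = u^(q+1)" by (simp add: cj_def)

lemma U_iff: "u \<in> U \<longleftrightarrow> cj u * u = 1" by (simp add: U_def cjmul)
lemma U_ne0: "u \<in> U \<Longrightarrow> u \<noteq> 0" unfolding U_iff by auto
lemma U_cj: "u \<in> U \<Longrightarrow> cj u = 1 / u" unfolding U_iff by (auto simp: eq_divide_eq)
lemma U_one: "1 \<in> U" unfolding U_iff by simp
lemma U_mult: "u \<in> U \<Longrightarrow> v \<in> U \<Longrightarrow> u * v \<in> U" unfolding U_def mem_Collect_eq by (metis mult_1 power_mult_distrib)
lemma U_div: "u \<in> U \<Longrightarrow> v \<in> U \<Longrightarrow> u / v \<in> U" unfolding U_def mem_Collect_eq by (metis div_by_1 power_divide)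

lemma eta_sq: "u \<in> U \<Longrightarrow> eta u * eta u = 1"
  unfolding eta_def U_def by (simp add: h2 flip: power_add mult_2)
lemma eta_pm: "u \<in> U \<Longrightarrow> eta u = 1 \<or> eta u = -1" using eta_sq sq_pm1 by blast
lemma eta_mult: "eta (u*v) = eta u * eta v" by (simp add: eta_def power_mult_distrib)
lemma eta_div: "eta (u/v) = eta u / eta v" by (simp add: eta_def power_divide)
lemma eps_sq: "eps * eps = 1" unfolding eps_def by (simp flip: power_add mult_2 add: power_mult)
lemma eps_pm: "eps = 1 \<or> eps = -1" using eps_sq sq_pm1 by blast

lemma etr_mult_neg: "u \<in> U \<Longrightarrow> eta v = - eta u \<Longrightarrow> etr v = - etr u"
  using eta_pm[of u] m1_ne unfolding etr_def by auto

lemma card_U: "card U = q + 1"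
proof (rule antisym)
  show "card U \<le> q + 1" unfolding U_def by (rule roots_bound) simp
next
  have "card (UNIV - {0::'a}) \<le> (q - 1) * card ((\<lambda>x. x^(q-1)) ` (UNIV - {0::'a}))"
  proof (rule fibre_card)
    fix b :: 'a
    have "{a \<in> UNIV - {0}. a^(q-1) = b} \<subseteq> {x. x^(q-1) = b}" by auto
    moreover have "card {x::'a. x^(q-1) = b} \<le> q - 1" using q3 by (intro roots_bound) simp
    ultimately show "card {a \<in> UNIV - {0}. a^(q-1) = b} \<le> q - 1"
      by (meson card_mono finite order_trans)
  qed simp
  moreover have "(\<lambda>x. x^(q-1)) ` (UNIV - {0::'a}) \<subseteq> U"
  proof
    fix y assume "y \<in> (\<lambda>x. x^(q-1)) ` (UNIV - {0::'a})"
    then obtain x where x: "x \<noteq> 0" "y = x^(q-1)" by auto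
    have e: "(q-1)*(q+1) = q*q - 1" using q3 by (cases q) (auto simp: algebra_simps)
    show "y \<in> U" unfolding U_def mem_Collect_eq x(2) power_mult[symmetric] e using fermat[OF x(1)] .
  qed
  then have "card ((\<lambda>x. x^(q-1)) ` (UNIV - {0::'a})) \<le> card U" by (simp add: card_mono)
  moreover have "card (UNIV - {0::'a}) = (q-1)*(q+1)" using cardq q3
    by (cases q) (auto simp: card_Diff_singleton algebra_simps)
  ultimately have "(q-1)*(q+1) \<le> (q-1) * card U"
    by (metis le_trans mult_le_mono2)
  then have "0 < q - 1 \<longrightarrow> q + 1 \<le> card U" by (rule mult_le_cancel1[THEN iffD1])
  then show "q + 1 \<le> card U" using q3 by simp
qed

lemma exists_t: "\<exists>t\<in>U. eta t = -1"
proof -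
  have h1: "h \<ge> 1" using h2 q3 by linarith
  have "card {u::'a. u^h = 1} \<le> h" using h1 by (rule roots_bound)
  moreover have "h < q + 1" using h2 by linarith
  ultimately have "\<not> U \<subseteq> {u::'a. u^h = 1}" using card_U
    by (metis card_mono finite leD le_trans)
  then obtain t where "t \<in> U" "eta t \<noteq> 1" unfolding eta_def by auto
  then show ?thesis using eta_pm by blast
qed

lemma card_eta: assumes "s = 1 \<or> s = -1" shows "card {u\<in>U. eta u = s} = h"
proof -
  obtain t where t: "t \<in> U" "eta t = -1" using exists_t by blast
  have t0: "t \<noteq> 0" using t U_ne0 by blast
  have bij: "bij_betw (\<lambda>u. t * u) {u\<in>U. eta u = 1} {u\<in>U. eta u = -1}"
  proof (rule bij_betw_byWitness[where f'="\<lambda>u. u / t"])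
    show "\<forall>a\<in>{u \<in> U. eta u = 1}. t * a / t = a" using t0 by simp
    show "\<forall>a'\<in>{u \<in> U. eta u = - 1}. t * (a' / t) = a'" using t0 by simp
    show "(*) t ` {u \<in> U. eta u = 1} \<subseteq> {u \<in> U. eta u = - 1}"
      using t by (auto simp: U_mult eta_mult)
    show "(\<lambda>u. u / t) ` {u \<in> U. eta u = - 1} \<subseteq> {u \<in> U. eta u = 1}"
      using t by (auto simp: U_div eta_div)
  qed
  then have c: "card {u\<in>U. eta u = 1} = card {u\<in>U. eta u = -1}" by (rule bij_betw_same_card)
  have "U = {u\<in>U. eta u = 1} \<union> {u\<in>U. eta u = -1}" using eta_pm by auto
  moreover have "{u\<in>U. eta u = 1} \<inter> {u\<in>U. eta u = -1} = {}" using m1_ne by auto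
  ultimately have "card U = card {u\<in>U. eta u = 1} + card {u\<in>U. eta u = -1}"
    by (metis card_Un_disjoint finite)
  then have "2 * card {u\<in>U. eta u = 1} = q + 1" using c card_U by simp
  then have "card {u\<in>U. eta u = 1} = h" using h2 by simp
  then show ?thesis using c assms by auto
qed

lemma sum_etr: "(\<Sum>u\<in>U. etr u) = 0"
proof -
  define A where "A = {u\<in>U. eta u = 1}"
  define B where "B = {u\<in>U. eta u = -1}"
  have AB: "A \<union> B = U" using eta_pm unfolding A_def B_def by auto
  have d: "A \<inter> B = {}" using m1_ne unfolding A_def B_def by auto
  have "(\<Sum>u\<in>A \<union> B. etr u) = (\<Sum>u\<in>A. etr u) + (\<Sum>u\<in>B. etr u)"
    using d by (intro sum.union_disjoint) auto
  also have "(\<Sum>u\<in>A. etr u) = (\<Sum>u\<in>A. 1)" by (rule sum.cong) (auto simp: etr_def A_def)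
  also have "(\<Sum>u\<in>B. etr u) = (\<Sum>u\<in>B. -1)" using m1_ne by (intro sum.cong) (auto simp: etr_def B_def)
  also have "(\<Sum>u\<in>A. (1::real)) + (\<Sum>u\<in>B. -1) = 0"
    using card_eta[of 1] card_eta[of "-1"] unfolding A_def B_def by simp
  finally show ?thesis unfolding AB .
qed

lemma chord: assumes "u \<in> U" "v \<in> U" "u \<noteq> v" shows "chi (u - v) = eps * eta u * eta v"
proof -
  have u0: "u \<noteq> 0" and v0: "v \<noteq> 0" using assms U_ne0 by auto
  have y0: "u - v \<noteq> 0" using assms by simp
  have c: "cj (u - v) / (u - v) = (-1) * inverse u * inverse v"
    using u0 v0 y0 assms by (simp add: cj_diff U_cj field_simps)
  have "chi (u - v) = eps * inverse (eta u) * inverse (eta v)"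
    unfolding chi_rho[OF y0] c power_mult_distrib power_inverse eps_def eta_def ..
  also have "inverse (eta u) = eta u" using eta_pm[OF assms(1)] by auto
  also have "inverse (eta v) = eta v" using eta_pm[OF assms(2)] by auto
  finally show ?thesis .
qed

definition sig :: "'a \<Rightarrow> 'a \<Rightarrow> 'a" where "sig x u = (u - x) / (cj x * u - 1)"

context
  fixes x :: 'a assumes xU: "x \<notin> U"
begin

lemma N1: "x * cj x \<noteq> 1" using xU U_iff by (metis mult.commute)

lemma den_ne: assumes "u \<in> U" shows "cj x * u - 1 \<noteq> 0"
proof
  assume "cj x * u - 1 = 0"
  then have "cj x = 1 / u" using U_ne0[OF assms] by (simp add: eq_divide_eq)
  then have "cj x = cj u" using U_cj[OF assms] by simp
  then have "x = u" by (rule cj_inj)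
  then show False using xU assms by simp
qed

lemma ux: "u \<in> U \<Longrightarrow> u \<noteq> x" using xU by auto

lemma cj_sig: assumes "u \<in> U" shows "cj (sig x u) = (1 - cj x * u) / (x - u)"
proof -
  have u0: "u \<noteq> 0" using U_ne0 assms by blast
  have d: "cj x * u - 1 \<noteq> 0" using den_ne assms by blast
  have d2: "x - u \<noteq> 0" using ux assms by auto
  show ?thesis unfolding sig_def cj_div cj_diff cj_mult cj_cj cj_one U_cj[OF assms]
    using u0 d d2 by (simp add: field_simps)
qed

lemma sig_U: assumes "u \<in> U" shows "sig x u \<in> U"
proof -
  have u0: "u \<noteq> 0" using U_ne0 assms by blast
  have d: "cj x * u \<noteq> 1" using den_ne assms by auto
  have d2: "x \<noteq> u" using ux assms by auto
  have "cj (sig x u) * sig x u = 1" unfolding cj_sig[OF assms]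
    unfolding sig_def using idA[OF u0 d2 d] .
  then show ?thesis unfolding U_iff .
qed

lemma sig_sig: assumes "u \<in> U" shows "sig x (sig x u) = u"
proof -
  have d: "cj x * u \<noteq> 1" using den_ne assms by auto
  show ?thesis unfolding sig_def using idB[OF d N1] .
qed

lemma rho_sig: assumes "u \<in> U"
  shows "cj (sig x u - x) / (sig x u - x) = cj (u - x) / (u - x)"
proof -
  have u0: "u \<noteq> 0" using U_ne0 assms by blast
  have d: "cj x * u \<noteq> 1" using den_ne assms by auto
  have d2: "x \<noteq> u" using ux assms by auto
  show ?thesis unfolding cj_diff unfolding cj_sig[OF assms] U_cj[OF assms]
    unfolding sig_def using idC[OF u0 d2 d N1] .
qed

lemma chi_sig: assumes "u \<in> U" shows "chi (sig x u - x) = chi (u - x)"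
proof -
  have "sig x u - x \<noteq> 0" using ux sig_U assms by auto
  moreover have "u - x \<noteq> 0" using ux assms by auto
  ultimately show ?thesis using chi_rho rho_sig assms by metis
qed

lemma fixed: assumes "u \<in> U" "sig x u = u" shows "chi (u - x) = eps"
proof -
  have u0: "u \<noteq> 0" using U_ne0 assms by blast
  have d: "cj x * u - 1 \<noteq> 0" using den_ne assms by blast
  have d1: "cj x * u \<noteq> 1" using d by auto
  have d2: "u - x \<noteq> 0" using ux assms by auto
  have e: "u - x = u * (cj x * u - 1)" using assms(2) d unfolding sig_def by (simp add: field_simps)
  have r: "cj (u - x) / (u - x) = (-1) * (inverse u * inverse u)"
    unfolding cj_diff U_cj[OF assms(1)] using idD[OF u0 d1 e] .
  have "chi (u - x) = eps * (inverse (eta u) * inverse (eta u))"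
    unfolding chi_rho[OF d2] r power_mult_distrib power_inverse eps_def eta_def ..
  also have "inverse (eta u) = eta u" using eta_pm[OF assms(1)] by auto
  finally show ?thesis using eta_sq[OF assms(1)] by simp
qed

lemma nonfixed: assumes "u \<in> U" "sig x u \<noteq> u" shows "eta (sig x u) = eps * chi (u - x) * eta u"
proof -
  define s where "s = sig x u"
  have sU: "s \<in> U" using sig_U assms s_def by blast
  have a0: "s - x \<noteq> 0" using ux sU by auto
  have b0: "u - x \<noteq> 0" using ux assms by auto
  define z where "z = (s - x) / (u - x)"
  have r: "cj (s - x) / (s - x) = cj (u - x) / (u - x)" using rho_sig assms s_def by blast
  have cb0: "cj (u - x) \<noteq> 0" using b0 cj_eq0 by blast
  have "cj z = z" unfolding z_def cj_div using r a0 b0 cb0 by (simp add: field_simps)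
  then have cz: "cj (1 - z) = 1 - z" by (simp add: cj_diff)
  have z1: "1 - z \<noteq> 0" using assms(2) b0 unfolding z_def s_def by (simp add: field_simps)
  have "u - s = (u - x) * (1 - z)" unfolding z_def using b0 by (simp add: field_simps)
  then have "chi (u - s) = chi (u - x)" using chi_mult chi_fq[OF z1 cz] by simp
  moreover have "chi (u - s) = eps * eta u * eta s" using chord[OF assms(1) sU] assms(2) s_def by auto
  ultimately have "eps * eta u * eta s = chi (u - x)" by simp
  then have "eps * eta u * (eps * eta u * eta s) = eps * eta u * chi (u - x)" by simp
  then have "(eps * eps) * (eta u * eta u) * eta s = eps * chi (u - x) * eta u" by (simp add: ac_simps)
  then show ?thesis using eps_sq eta_sq[OF assms(1)] s_def by simp
qed

lemma sum_half: assumes "d = 1 \<or> d = -1" "d \<noteq> eps"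
  shows "(\<Sum>u\<in>{u\<in>U. chi (u - x) = d}. etr u) = 0"
proof -
  define P where "P = {u\<in>U. chi (u - x) = d}"
  have bij: "bij_betw (sig x) P P"
    by (rule bij_betw_byWitness[where f'="sig x"]) (auto simp: P_def sig_sig sig_U chi_sig)
  have neg: "etr (sig x u) = - etr u" if "u \<in> P" for u
  proof -
    have uU: "u \<in> U" and c: "chi (u - x) = d" using that P_def by auto
    have "sig x u \<noteq> u" using fixed uU c assms(2) by blast
    then have "eta (sig x u) = eps * d * eta u" using nonfixed uU c by simp
    moreover have "eps * d = -1" using assms eps_pm m1_ne by auto
    ultimately show ?thesis using etr_mult_neg uU by simp
  qed
  have "(\<Sum>u\<in>P. etr u) = (\<Sum>u\<in>P. etr (sig x u))"
    using sum.reindex_bij_betw[OF bij, of etr] by simp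
  also have "\<dots> = (\<Sum>u\<in>P. - etr u)" using neg by (rule sum.cong[OF refl])
  finally have "(\<Sum>u\<in>P. etr u) = 0" by (simp add: sum_negf)
  then show ?thesis unfolding P_def .
qed

lemma sum_off: assumes "d = 1 \<or> d = -1"
  shows "(\<Sum>u\<in>{u\<in>U. chi (u - x) = d}. etr u) = 0"
proof (cases "d = eps")
  case False then show ?thesis using sum_half assms by blast
next
  case True
  define A where "A = {u\<in>U. chi (u - x) = d}"
  define B where "B = {u\<in>U. chi (u - x) = -d}"
  have "u \<in> A \<union> B" if "u \<in> U" for u
  proof -
    have "u - x \<noteq> 0" using ux that by auto
    then have "chi (u - x) = 1 \<or> chi (u - x) = -1" by (rule chi_pm)
    then show ?thesis using that assms unfolding A_def B_def by auto
  qed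
  then have AB: "A \<union> B = U" unfolding A_def B_def by auto
  have dj: "A \<inter> B = {}" using m1_ne assms unfolding A_def B_def by auto
  have "-d \<noteq> eps" using True assms m1_ne by auto
  then have sB: "(\<Sum>u\<in>B. etr u) = 0" using sum_half assms unfolding B_def by auto
  have "(\<Sum>u\<in>U. etr u) = (\<Sum>u\<in>A. etr u) + (\<Sum>u\<in>B. etr u)"
    unfolding AB[symmetric] using dj by (intro sum.union_disjoint) auto
  then show ?thesis using sB sum_etr unfolding A_def[symmetric] by simp
qed

end

lemma sum_on: assumes "x \<in> U" "d = 1 \<or> d = -1"
  shows "(\<Sum>u\<in>{u\<in>U. u \<noteq> x \<and> chi (u - x) = d}. etr u)
        = (if d = eps then (real h - 1) * etr x else - real h * etr x)"
proof -
  have seteq: "{u\<in>U. u \<noteq> x \<and> chi (u - x) = d} = {u\<in>U. u \<noteq> x \<and> eta u = eps * d * eta x}"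
  proof (intro Collect_cong conj_cong refl)
    fix u assume uU: "u \<in> U" and ne: "u \<noteq> x"
    have c: "chi (u - x) = eps * eta u * eta x" using chord uU assms(1) ne by blast
    show "(chi (u - x) = d) = (eta u = eps * d * eta x)"
      unfolding c by (rule swap_pm[OF eps_sq eta_sq[OF assms(1)]])
  qed
  have h1: "h \<ge> 1" using h2 q3 by linarith
  have ex: "eta x = 1 \<or> eta x = -1" using eta_pm assms(1) by blast
  show ?thesis
  proof (cases "d = eps")
    case True
    then have ed: "eps * d = 1" using eps_sq by simp
    have S: "{u\<in>U. u \<noteq> x \<and> chi (u - x) = d} = {u\<in>U. eta u = eta x} - {x}"
      unfolding seteq ed by auto
    have cS: "card ({u\<in>U. eta u = eta x} - {x}) = h - 1"
      using card_eta[OF ex] assms(1) by (simp add: card_Diff_singleton)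
    have "(\<Sum>u\<in>{u\<in>U. eta u = eta x} - {x}. etr u) = (\<Sum>u\<in>{u\<in>U. eta u = eta x} - {x}. etr x)"
      by (rule sum.cong) (auto simp: etr_def)
    also have "\<dots> = real (h - 1) * etr x" using cS by simp
    also have "real (h - 1) = real h - 1" using h1 by (simp add: of_nat_diff)
    finally show ?thesis unfolding S using True by simp
  next
    case False
    have ed: "eps * d = -1"
    proof -
      have "eps = 1 \<or> eps = -1" by (rule eps_pm)
      then show ?thesis using assms(2) False by auto
    qed
    have nx: "eta x \<noteq> - eta x"
    proof
      assume "eta x = - eta x"
      then show False using ex m1_ne by (elim disjE) (simp_all add: eq_neg_iff_add_eq_0 two_ne)
    qed
    have S: "{u\<in>U. u \<noteq> x \<and> chi (u - x) = d} = {u\<in>U. eta u = - eta x}"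
      unfolding seteq ed using nx by auto
    have ex': "- eta x = 1 \<or> - eta x = -1" using ex by auto
    have "(\<Sum>u\<in>{u\<in>U. eta u = - eta x}. etr u) = (\<Sum>u\<in>{u\<in>U. eta u = - eta x}. - etr x)"
      by (rule sum.cong) (auto intro: etr_mult_neg[OF assms(1)])
    also have "\<dots> = - real h * etr x" using card_eta[OF ex'] by simp
    finally show ?thesis unfolding S using False by simp
  qed
qed

lemma chi_one: "chi 1 = 1" by (simp add: chi_def)

lemma construct: assumes dpm: "d = 1 \<or> d = -1"
  shows "\<exists>f::'a\<Rightarrow>real. paley_eigenfunction f (if d = eps then real h - 1 else - real h)
           \<and> card (supp_fun f) = q + 1"
proof -
  obtain c :: 'a where c0: "c \<noteq> 0" and cd: "chi c = d"
    using dpm nonsq chi_one by (metis one_neq_zero)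
  define f where "f y = (if y / c \<in> U then etr (y / c) else 0)" for y
  define lam where "lam = (if d = eps then real h - 1 else - real h)"
  have etr_ne: "etr u \<noteq> 0" for u by (simp add: etr_def)
  have supp: "supp_fun f = (\<lambda>u. c * u) ` U"
  proof (rule set_eqI)
    fix y
    have "y \<in> (\<lambda>u. c * u) ` U \<longleftrightarrow> y / c \<in> U"
    proof
      assume "y \<in> (\<lambda>u. c * u) ` U" then show "y / c \<in> U" using c0 by auto
    next
      assume "y / c \<in> U" then show "y \<in> (\<lambda>u. c * u) ` U"
        using c0 by (intro image_eqI[of y _ "y / c"]) auto
    qed
    then show "y \<in> supp_fun f \<longleftrightarrow> y \<in> (\<lambda>u. c * u) ` U"
      unfolding supp_fun_def f_def using etr_ne by auto
  qed
  have inj: "inj_on (\<lambda>u. c * u) A" for A using c0 by (auto simp: inj_on_def)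
  have card_supp: "card (supp_fun f) = q + 1" unfolding supp using card_U card_image[OF inj] by simp
  have fne: "f \<noteq> (\<lambda>_. 0)"
  proof
    assume "f = (\<lambda>_. 0)"
    then have "f c = 0" by simp
    then show False unfolding f_def using c0 U_one etr_ne by simp
  qed
  have eig: "(\<Sum>y\<in>{y. paley_adj x y}. f y) = lam * f x" for x
  proof -
    define x' where "x' = x / c"
    have "(\<Sum>y\<in>{y. paley_adj x y}. f y) = (\<Sum>y\<in>{y\<in>{y. paley_adj x y}. y / c \<in> U}. etr (y / c))"
      unfolding f_def by (rule sum.inter_filter[symmetric]) simp
    also have "{y\<in>{y. paley_adj x y}. y / c \<in> U} = (\<lambda>u. c * u) ` {u\<in>U. paley_adj x (c * u)}"
    proof (rule set_eqI)
      fix y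
      show "y \<in> {y\<in>{y. paley_adj x y}. y / c \<in> U} \<longleftrightarrow> y \<in> (\<lambda>u. c * u) ` {u\<in>U. paley_adj x (c * u)}"
      proof
        assume "y \<in> {y\<in>{y. paley_adj x y}. y / c \<in> U}"
        then show "y \<in> (\<lambda>u. c * u) ` {u\<in>U. paley_adj x (c * u)}"
          using c0 by (intro image_eqI[of y _ "y / c"]) auto
      next
        assume "y \<in> (\<lambda>u. c * u) ` {u\<in>U. paley_adj x (c * u)}"
        then show "y \<in> {y\<in>{y. paley_adj x y}. y / c \<in> U}" using c0 by auto
      qed
    qed
    also have "(\<Sum>y\<in>(\<lambda>u. c * u) ` {u\<in>U. paley_adj x (c * u)}. etr (y / c))
             = (\<Sum>u\<in>{u\<in>U. paley_adj x (c * u)}. etr u)"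
      using c0 by (simp add: sum.reindex[OF inj])
    also have "{u\<in>U. paley_adj x (c * u)} = {u\<in>U. u \<noteq> x' \<and> chi (u - x') = d}"
    proof (intro Collect_cong conj_cong refl)
      fix u
      have e: "c * u - x = c * (u - x')" unfolding x'_def using c0 by (simp add: field_simps)
      have "paley_adj x (c * u) \<longleftrightarrow> c * u \<noteq> x \<and> d * chi (u - x') = 1"
        unfolding adj_iff e chi_mult cd ..
      also have "c * u \<noteq> x \<longleftrightarrow> u \<noteq> x'" unfolding x'_def using c0 by (auto simp: field_simps)
      also have "d * chi (u - x') = 1 \<longleftrightarrow> chi (u - x') = d" using dpm by (elim disjE) (auto simp: minus_equation_iff)
      finally show "paley_adj x (c * u) \<longleftrightarrow> (u \<noteq> x' \<and> chi (u - x') = d)" .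
    qed
    finally have S: "(\<Sum>y\<in>{y. paley_adj x y}. f y) = (\<Sum>u\<in>{u\<in>U. u \<noteq> x' \<and> chi (u - x') = d}. etr u)" .
    show ?thesis
    proof (cases "x' \<in> U")
      case True
      then have "f x = etr x'" unfolding f_def x'_def by simp
      then show ?thesis unfolding S sum_on[OF True dpm] lam_def by simp
    next
      case False
      then have "f x = 0" unfolding f_def x'_def by simp
      moreover have "{u\<in>U. u \<noteq> x' \<and> chi (u - x') = d} = {u\<in>U. chi (u - x') = d}" using False by auto
      ultimately show ?thesis unfolding S using sum_off[OF False dpm] by simp
    qed
  qed
  show ?thesis
    by (rule exI[of _ f]) (use fne eig card_supp in \<open>auto simp: paley_eigenfunction_def lam_def\<close>)
qed

lemma card_S: "q*q - 1 \<le> 2 * card {w::'a. \<exists>z. z \<noteq> 0 \<and> w = z*z}"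
proof -
  have "{w::'a. \<exists>z. z \<noteq> 0 \<and> w = z*z} = Sq" unfolding Sq_def by auto
  then show ?thesis using card_sq by simp
qed

end

lemma sum_abs_bound:
  fixes f :: "'a::finite \<Rightarrow> real"
  assumes "\<And>y. \<bar>f y\<bar> \<le> m"
  shows "\<bar>\<Sum>y\<in>A. f y\<bar> \<le> real (card (A \<inter> supp_fun f)) * m"
proof -
  have "\<bar>\<Sum>y\<in>A. f y\<bar> \<le> (\<Sum>y\<in>A. \<bar>f y\<bar>)" by (rule sum_abs)
  also have "\<dots> = (\<Sum>y\<in>A \<inter> supp_fun f. \<bar>f y\<bar>)"
    by (rule sum.mono_neutral_right) (auto simp: supp_fun_def)
  also have "\<dots> \<le> (\<Sum>y\<in>A \<inter> supp_fun f. m)" by (rule sum_mono) (use assms in auto)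
  finally show ?thesis by simp
qed

lemma lower:
  fixes f :: "'a::{field,finite} \<Rightarrow> real" and l :: real
  assumes ef: "paley_eigenfunction f l"
    and sl: "real (card {w::'a. \<exists>z. z \<noteq> 0 \<and> w = z*z}) \<noteq> l"
  shows "\<bar>l\<bar> + \<bar>1 + l\<bar> + 1 \<le> real (card (supp_fun f))"
proof -
  define S where "S = {w::'a. \<exists>z. z \<noteq> 0 \<and> w = z*z}"
  have fne: "f \<noteq> (\<lambda>_. 0)" and eq: "\<And>x. (\<Sum>y\<in>{y. paley_adj x y}. f y) = l * f x"
    using ef unfolding paley_eigenfunction_def by auto
  have cardin: "card {x. paley_adj x y} = card S" for y :: 'a
  proof -
    have "{x. paley_adj x y} = (\<lambda>w. w + y) ` S"
      unfolding S_def paley_adj_def by (auto simp: image_iff algebra_simps)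
    moreover have "inj_on (\<lambda>w. w + y) S" by (auto simp: inj_on_def)
    ultimately show ?thesis by (simp add: card_image)
  qed
  have "(\<Sum>x\<in>UNIV. \<Sum>y\<in>{y. paley_adj x y}. f y) = (\<Sum>x\<in>UNIV. \<Sum>y\<in>UNIV. if paley_adj x y then f y else 0)"
    by (simp add: sum.inter_filter[symmetric])
  also have "\<dots> = (\<Sum>y\<in>UNIV. \<Sum>x\<in>UNIV. if paley_adj x y then f y else 0)" by (rule sum.swap)
  also have "\<dots> = (\<Sum>y\<in>UNIV. f y * real (card S))"
  proof (rule sum.cong[OF refl])
    fix y
    have "(\<Sum>x\<in>UNIV. if paley_adj x y then f y else 0) = (\<Sum>x\<in>{x. paley_adj x y}. f y)"
      by (simp add: sum.inter_filter[symmetric])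
    then show "(\<Sum>x\<in>UNIV. if paley_adj x y then f y else 0) = f y * real (card S)"
      using cardin by simp
  qed
  finally have "(\<Sum>x\<in>UNIV. l * f x) = real (card S) * (\<Sum>y\<in>UNIV. f y)"
    using eq by (simp add: sum_distrib_right sum_distrib_left mult.commute)
  then have "l * (\<Sum>y\<in>UNIV. f y) = real (card S) * (\<Sum>y\<in>UNIV. f y)"
    by (simp add: sum_distrib_left)
  then have sum0: "(\<Sum>y\<in>UNIV. f y) = 0" using sl unfolding S_def by auto
  define mx where "mx = Max (range (\<lambda>y. \<bar>f y\<bar>))"
  have bnd: "\<bar>f y\<bar> \<le> mx" for y unfolding mx_def by (rule Max_ge) auto
  have "mx \<in> range (\<lambda>y. \<bar>f y\<bar>)" unfolding mx_def by (rule Max_in) auto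
  then obtain x0 where x0: "\<bar>f x0\<bar> = mx" by auto
  obtain y1 where "f y1 \<noteq> 0" using fne by auto
  then have mpos: "mx > 0" using bnd[of y1] by auto
  define N where "N = {y. paley_adj x0 y}"
  define M where "M = UNIV - N - {x0}"
  have x0N: "x0 \<notin> N" unfolding N_def paley_adj_def by auto
  have sN: "(\<Sum>y\<in>N. f y) = l * f x0" using eq unfolding N_def by simp
  have split: "(\<Sum>y\<in>UNIV. f y) = f x0 + (\<Sum>y\<in>N. f y) + (\<Sum>y\<in>M. f y)"
  proof -
    have u: "UNIV = insert x0 (N \<union> M)" unfolding M_def by auto
    have "(\<Sum>y\<in>insert x0 (N \<union> M). f y) = f x0 + (\<Sum>y\<in>N \<union> M. f y)"
      using x0N by (intro sum.insert) (auto simp: M_def)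
    also have "(\<Sum>y\<in>N \<union> M. f y) = (\<Sum>y\<in>N. f y) + (\<Sum>y\<in>M. f y)"
      by (rule sum.union_disjoint) (auto simp: M_def)
    finally show ?thesis unfolding u[symmetric] by simp
  qed
  have sM: "(\<Sum>y\<in>M. f y) = - (1 + l) * f x0" using split sum0 sN by (simp add: algebra_simps)
  have cN: "\<bar>l\<bar> * mx \<le> real (card (N \<inter> supp_fun f)) * mx"
    using sum_abs_bound[where f=f and m=mx and A=N] bnd sN x0 by (simp add: abs_mult)
  have cM: "\<bar>1 + l\<bar> * mx \<le> real (card (M \<inter> supp_fun f)) * mx"
  proof -
    have ab: "\<bar>-1 - l\<bar> = \<bar>1 + l\<bar>" by arith
    show ?thesis using sum_abs_bound[where f=f and m=mx and A=M] bnd sM x0 ab by (simp add: abs_mult)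
  qed
  have cN': "\<bar>l\<bar> \<le> real (card (N \<inter> supp_fun f))" using cN mpos by simp
  have cM': "\<bar>1 + l\<bar> \<le> real (card (M \<inter> supp_fun f))" using cM mpos by simp
  have x0s: "x0 \<in> supp_fun f" unfolding supp_fun_def using x0 mpos by auto
  have sub: "insert x0 ((N \<inter> supp_fun f) \<union> (M \<inter> supp_fun f)) \<subseteq> supp_fun f" using x0s by auto
  have "card (insert x0 ((N \<inter> supp_fun f) \<union> (M \<inter> supp_fun f)))
        = 1 + card (N \<inter> supp_fun f) + card (M \<inter> supp_fun f)"
  proof -
    have "card (insert x0 ((N \<inter> supp_fun f) \<union> (M \<inter> supp_fun f)))
          = Suc (card ((N \<inter> supp_fun f) \<union> (M \<inter> supp_fun f)))"
      using x0N unfolding M_def by (intro card_insert_disjoint) auto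
    also have "card ((N \<inter> supp_fun f) \<union> (M \<inter> supp_fun f)) = card (N \<inter> supp_fun f) + card (M \<inter> supp_fun f)"
      by (rule card_Un_disjoint) (auto simp: M_def)
    finally show ?thesis by simp
  qed
  moreover have "card (insert x0 ((N \<inter> supp_fun f) \<union> (M \<inter> supp_fun f))) \<le> card (supp_fun f)"
    by (rule card_mono[OF _ sub]) simp
  ultimately have "1 + card (N \<inter> supp_fun f) + card (M \<inter> supp_fun f) \<le> card (supp_fun f)" by simp
  then have "1 + real (card (N \<inter> supp_fun f)) + real (card (M \<inter> supp_fun f)) \<le> real (card (supp_fun f))"
    by linarith
  then show ?thesis using cN' cM' by linarith
qed

theorem mainTheorem7:
  fixes q :: nat and l :: real
  assumes "odd q"
    and "\<exists>p k. prime p \<and> k \<ge> 1 \<and> q = p ^ k"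
    and "card (UNIV :: 'a::{field,finite} set) = q ^ 2"
    and "l = (-1 + real q) / 2 \<or> l = (-1 - real q) / 2"
  shows "(\<exists>f :: 'a \<Rightarrow> real. paley_eigenfunction f l \<and> card (supp_fun f) = q + 1)
       \<and> (\<forall>f :: 'a \<Rightarrow> real. paley_eigenfunction f l \<longrightarrow> q + 1 \<le> card (supp_fun f))"
proof -
  obtain p k where pk: "prime p" "k \<ge> 1" "q = p ^ k" using assms(2) by blast
  interpret P: pf q p k "TYPE('a)"
    by (intro pf.intro assms(1) assms(3) pk)
  have "real (2 * P.h) = real (q + 1)" by (simp only: P.h2)
  then have hq: "2 * real P.h = real q + 1" by simp
  have q3: "real q \<ge> 3" using P.q3 by simp
  show ?thesis
  proof
    show "\<exists>f :: 'a \<Rightarrow> real. paley_eigenfunction f l \<and> card (supp_fun f) = q + 1"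
    proof (cases "l = (-1 + real q) / 2")
      case True
      have "P.eps = 1 \<or> P.eps = -1" by (rule P.eps_pm)
      then obtain f :: "'a \<Rightarrow> real" where
        f1: "paley_eigenfunction f (if P.eps = P.eps then real P.h - 1 else - real P.h)"
        and f2: "card (supp_fun f) = q + 1" using P.construct by blast
      have e: "(if P.eps = P.eps then real P.h - 1 else - real P.h) = l" using True hq by simp
      show ?thesis using f1 f2 unfolding e by blast
    next
      case False
      then have l2: "l = (-1 - real q) / 2" using assms(4) by blast
      have d: "- P.eps = 1 \<or> - P.eps = -1" using P.eps_pm by auto
      have ne: "- P.eps \<noteq> P.eps"
      proof -
        have "P.eps = 1 \<or> P.eps = -1" by (rule P.eps_pm)
        then show ?thesis
        proof (elim disjE)
          assume "P.eps = 1" then show ?thesis using P.m1_ne by simp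
        next
          assume "P.eps = -1" then show ?thesis using P.m1_ne by (metis minus_minus)
        qed
      qed
      obtain f :: "'a \<Rightarrow> real" where
        f1: "paley_eigenfunction f (if - P.eps = P.eps then real P.h - 1 else - real P.h)"
        and f2: "card (supp_fun f) = q + 1" using P.construct[OF d] by blast
      have e: "(if - P.eps = P.eps then real P.h - 1 else - real P.h) = l" using ne l2 hq by simp
      show ?thesis using f1 f2 unfolding e by blast
    qed
  next
    show "\<forall>f :: 'a \<Rightarrow> real. paley_eigenfunction f l \<longrightarrow> q + 1 \<le> card (supp_fun f)"
    proof (intro allI impI)
      fix f :: "'a \<Rightarrow> real" assume ef: "paley_eigenfunction f l"
      have cs: "real q * real q - 1 \<le> 2 * real (card {w::'a. \<exists>z. z \<noteq> 0 \<and> w = z*z})"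
      proof -
        have "real (q * q - 1) \<le> real (2 * card {w::'a. \<exists>z. z \<noteq> 0 \<and> w = z*z})"
          using P.card_S by (simp only: of_nat_le_iff)
        moreover have "q * q \<ge> 1" using P.q3 by simp
        then have "real (q * q - 1) = real q * real q - 1" by (simp add: of_nat_diff)
        ultimately show ?thesis by simp
      qed
      have sl: "real (card {w::'a. \<exists>z. z \<noteq> 0 \<and> w = z*z}) \<noteq> l"
      proof
        assume a: "real (card {w::'a. \<exists>z. z \<noteq> 0 \<and> w = z*z}) = l"
        show False
        proof (cases "l = (-1 + real q) / 2")
          case True
          have "2 * l = real q - 1" using True by simp
          then have "real q * real q \<le> real q" using cs a by linarith
          moreover have "3 * real q \<le> real q * real q" using q3 by (intro mult_right_mono) auto
          ultimately show False using q3 by linarith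
        next
          case False
          then have l2: "l = (-1 - real q) / 2" using assms(4) by blast
          then have "l < 0" using q3 by simp
          moreover have "0 \<le> real (card {w::'a. \<exists>z. z \<noteq> 0 \<and> w = z*z})" by simp
          ultimately show False using a by linarith
        qed
      qed
      have "\<bar>l\<bar> + \<bar>1 + l\<bar> + 1 \<le> real (card (supp_fun f))" by (rule lower[OF ef sl])
      moreover have "\<bar>l\<bar> + \<bar>1 + l\<bar> + 1 = real q + 1"
      proof (cases "l = (-1 + real q) / 2")
        case True
        then have "l \<ge> 0" using q3 by (simp add: field_simps)
        then have "l \<ge> 0" "1 + l \<ge> 0" by simp_all
        then have e1: "\<bar>l\<bar> = l" and e2: "\<bar>1 + l\<bar> = 1 + l" by simp_all
        show ?thesis unfolding e1 e2 using True by (simp add: field_simps)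
      next
        case False
        then have l2: "l = (-1 - real q) / 2" using assms(4) by blast
        then have "1 + l \<le> 0" using q3 by (simp add: field_simps)
        then have "l \<le> 0" "1 + l \<le> 0" by simp_all
        then have e1: "\<bar>l\<bar> = - l" and e2: "\<bar>1 + l\<bar> = - (1 + l)" by simp_all
        show ?thesis unfolding e1 e2 using l2 by (simp add: field_simps)
      qed
      ultimately show "q + 1 \<le> card (supp_fun f)" by simp
    qed
  qed
qed

end
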